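(* Let $R$ be a $*$-ring. The following are equivalent: (1) $R$ is $*$-clean and $2\in U(R)$; (2) every element of $R$ is a sum of a unit and an element $t$ with $t^2=1$ and $t^*=t$.
   Context: A $*$-ring is a ring with identity with an involution $*$. A projection is $p$ with $p^2=p=p^*$. $R$ is $*$-clean if every element is a sum of a projection and a unit. $U(R)$ is the unit group. *)

theory Defs
  imports Main
begin

definition ring_involution :: "('a::ring_1 \<Rightarrow> 'a) \<Rightarrow> bool" where
  "ring_involution st \<longleftrightarrow>
     (\<forall>x y. st (x + y) = st x + st y) \<and>
     (\<forall>x y. st (x * y) = st y * st x) \<and>
     (\<forall>x. st (st x) = x)"

definition ring_unit :: "'a::ring_1 \<Rightarrow> bool" where
  "ring_unit u \<longleftrightarrow> (\<exists>v. u * v = 1 \<and> v * u = 1)"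

definition is_projection :: "('a::ring_1 \<Rightarrow> 'a) \<Rightarrow> 'a \<Rightarrow> bool" where
  "is_projection st p \<longleftrightarrow> p * p = p \<and> st p = p"

definition star_clean :: "('a::ring_1 \<Rightarrow> 'a) \<Rightarrow> bool" where
  "star_clean st \<longleftrightarrow> (\<forall>a. \<exists>p u. is_projection st p \<and> ring_unit u \<and> a = p + u)"

end

theory Submission
  imports Defs
begin

lemma two_comm: "(2::'a::ring_1) * x = x * 2"
  by (simp add: distrib_left distrib_right mult_2 mult_2_right)

lemma inv_comm:
  assumes "(2::'a::ring_1) * w = 1" "w * 2 = 1"
  shows "w * x = x * w"
proof -
  have "w * x = w * x * (2 * w)" using assms by simp
  also have "\<dots> = w * (2 * x) * w" by (simp add: two_comm mult.assoc)
  also have "\<dots> = (w * 2) * x * w" by (simp add: mult.assoc)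
  finally show ?thesis using assms by simp
qed

lemma st_one:
  assumes "ring_involution st"
  shows "st (1::'a::ring_1) = 1"
proof -
  have m: "\<And>x y. st (x * y) = st y * st x" and i: "\<And>x. st (st x) = x"
    using assms unfolding ring_involution_def by auto
  have "st (st 1 * 1) = st 1 * st (st 1)" by (rule m)
  hence "st (st 1) = st 1 * 1" by (simp add: i)
  thus ?thesis using i by simp
qed

lemma unit_mult:
  assumes "ring_unit (a::'a::ring_1)" "ring_unit b" shows "ring_unit (a * b)"
proof -
  obtain c where c: "a * c = 1" "c * a = 1" using assms(1) unfolding ring_unit_def by auto
  obtain d where d: "b * d = 1" "d * b = 1" using assms(2) unfolding ring_unit_def by auto
  have "a * b * (d * c) = 1" by (simp add: mult.assoc[symmetric] c) (simp add: mult.assoc d c)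
  moreover have "d * c * (a * b) = 1" by (simp add: mult.assoc[symmetric] c) (simp add: mult.assoc d c)
  ultimately show ?thesis unfolding ring_unit_def by blast
qed

theorem theorem2p5:
  fixes st :: "'a::ring_1 \<Rightarrow> 'a"
  assumes "ring_involution st"
  shows "(star_clean st \<and> ring_unit (2::'a)) \<longleftrightarrow>
         (\<forall>a. \<exists>t u. t * t = 1 \<and> st t = t \<and> ring_unit u \<and> a = t + u)"
proof -
  have add: "\<And>x y. st (x + y) = st x + st y" and m: "\<And>x y. st (x * y) = st y * st x"
    and i: "\<And>x. st (st x) = x"
    using assms unfolding ring_involution_def by auto
  have s1: "st 1 = 1" using st_one[OF assms] .
  have s2: "st 2 = (2::'a)" using add[of 1 1] s1 by (simp add: one_add_one[symmetric] del: one_add_one)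
  have stsub: "\<And>x y. st (x - y) = st x - st y"
    using add by (metis add_diff_cancel diff_add_cancel eq_diff_eq)
  have stw: "st w = w" if w: "2 * w = 1" "w * 2 = (1::'a)" for w
  proof -
    have "st w * 2 = 1" using m[of 2 w] w s1 s2 by simp
    hence "st w = w * (2 * st w)" using w by (metis mult.assoc mult_1_right two_comm)
    thus ?thesis using \<open>st w * 2 = 1\<close> by (simp add: two_comm)
  qed
  show ?thesis
  proof
    assume H: "star_clean st \<and> ring_unit (2::'a)"
    then obtain w where w: "2 * w = 1" "w * 2 = (1::'a)" unfolding ring_unit_def by auto
    have u2: "ring_unit (2::'a)" using H by simp
    show "\<forall>a. \<exists>t u. t * t = 1 \<and> st t = t \<and> ring_unit u \<and> a = t + u"
    proof
      fix a :: 'a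
      obtain p u where pu: "is_projection st p" "ring_unit u" "w * (a + 1) = p + u"
        using H unfolding star_clean_def by blast
      have pp: "p * p = p" "st p = p" using pu(1) unfolding is_projection_def by auto
      have "a + 1 = 2 * (w * (a + 1))" using w by (simp add: mult.assoc[symmetric])
      also have "\<dots> = 2 * p + 2 * u" using pu(3) by (simp add: distrib_left)
      finally have e: "a = (2 * p - 1) + 2 * u" by (simp add: algebra_simps)
      have "(2 * p - 1) * (2 * p - 1) = 1"
        using pp by (simp add: algebra_simps mult_2 mult_2_right)
      moreover have "st (2 * p - 1) = 2 * p - 1"
        using stsub m s1 s2 pp two_comm by metis
      moreover have "ring_unit (2 * u)" using unit_mult[OF u2 pu(2)] .
      ultimately show "\<exists>t u. t * t = 1 \<and> st t = t \<and> ring_unit u \<and> a = t + u"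
        using e by blast
    qed
  next
    assume H: "\<forall>a. \<exists>t u. t * t = 1 \<and> st t = t \<and> ring_unit u \<and> a = t + u"
    have u2: "ring_unit (2::'a)"
    proof -
      obtain t u where tu: "t * t = 1" "ring_unit u" "(1::'a) = t + u" using H by blast
      obtain v where v: "v * u = 1" using tu(2) unfolding ring_unit_def by auto
      have uu: "u = 1 - t" using tu(3) by (simp add: algebra_simps)
      have "u * (1 + t) = 0" using tu(1) by (simp add: uu algebra_simps)
      hence "v * u * (1 + t) = 0" by (simp add: mult.assoc)
      hence "1 + t = 0" using v by simp
      hence "t = -1" by (metis add.commute add_eq_0_iff2 minus_equation_iff)
      thus ?thesis using tu(2) uu by simp
    qed
    then obtain w where w: "2 * w = 1" "w * 2 = (1::'a)" unfolding ring_unit_def by auto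
    have sw: "st w = w" using stw[OF w] .
    have "star_clean st" unfolding star_clean_def
    proof
      fix a :: 'a
      obtain t u where tu: "t * t = 1" "st t = t" "ring_unit u" "2 * a - 1 = t + u" using H by blast
      define p where "p = w * (1 + t)"
      have "p * p = w * w * ((1 + t) * (1 + t))"
        unfolding p_def by (metis inv_comm[OF w] mult.assoc)
      also have "(1 + t) * (1 + t) = 2 * (1 + t)" using tu(1) by (simp add: algebra_simps mult_2)
      also have "w * w * (2 * (1 + t)) = w * (w * 2) * (1 + t)" by (simp add: mult.assoc)
      finally have "p * p = p" unfolding p_def using w by simp
      moreover have "st p = p" unfolding p_def using m add s1 tu(2) sw inv_comm[OF w] by metis
      moreover have "ring_unit (w * u)"
        using unit_mult[OF _ tu(3), of w] w unfolding ring_unit_def by (metis inv_comm[OF w])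
      moreover have "a = p + w * u"
      proof -
        have "a = w * (2 * a)" using w by (simp add: mult.assoc[symmetric])
        also have "2 * a = 1 + t + u" using tu(4) by (simp add: algebra_simps)
        finally show ?thesis unfolding p_def by (simp add: distrib_left)
      qed
      ultimately show "\<exists>p u. is_projection st p \<and> ring_unit u \<and> a = p + u"
        unfolding is_projection_def by blast
    qed
    with u2 show "star_clean st \<and> ring_unit (2::'a)" by simp
  qed
qed

end
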